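(* Let $P$ be a closed process of the Value-Passing Quality Calculus in which variables and names are bound exactly once and all quality guards are $\forall$ or $\exists$. For all labels $l$ occurring in $P$, the formula $[\![l]\!]$ contains no literal $\bar{x}$ of an input variable; in particular, $[\![l]\!]$ only contains literals $\bar{c}$ related to channels $c$.
   Context: Syntax: $P ::= \mathsf{0} \mid (\nu c)P \mid P_1 \mid P_2 \mid {^l}b.P \mid {^l}\bar{c}\langle t\rangle.P \mid\ !P \mid {^l}\mathsf{case}\ x\ \mathsf{of}\ \mathsf{some}(y): P_1\ \mathsf{else}\ P_2$; binders $b ::= c?x \mid \&_q(b_1,\dots,b_n)$, with $[\![\forall]\!]$ = conjunction and $[\![\exists]\!]$ = disjunction; terms $t::=c\mid y$; labels are unique. Translation: $T(\mathsf{0},\varphi)=\emptyset$; $T(!P,\varphi)=T(P,\varphi)$; $T(P_1\mid P_2,\varphi)=T(P_1,\varphi)\cup T(P_2,\varphi)$; $T((\nu c)P,\varphi)=T(P,\varphi)$; $T({^l}b.P,\varphi)=T(P,\varphi\wedge \mathsf{hp}(b))\cup\mathsf{th}(\varphi,b)\cup\{\varphi\leadsto\bar{l}\}$; $T({^l}\bar{c}\langle t\rangle.P,\varphi)=T(P,\varphi)\cup\{\varphi\leadsto\bar{c}\}\cup\{\varphi\leadsto\bar{l}\}$; $T({^l}\mathsf{case}\ x\ \mathsf{of}\ \mathsf{some}(y):P_1\ \mathsf{else}\ P_2,\varphi)=T(P_1,\varphi\wedge\bar{x})\cup T(P_2,\varphi\wedge\neg\bar{x})\cup\{\varphi\leadsto\bar{l}\}$;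 with $\mathsf{hp}(c?x)=\bar{c}$, $\mathsf{th}(\varphi,c?x)=\{(\varphi\wedge\bar{c})\leadsto\bar{x}\}$, $\mathsf{hp}(\&_q(b_1,\dots,b_n))=[\![q]\!](\mathsf{hp}(b_1),\dots,\mathsf{hp}(b_n))$, $\mathsf{th}(\varphi,\&_q(b_1,\dots,b_n))=\bigcup_i\mathsf{th}(\varphi,b_i)$. Normalise $T(P,\mathsf{tt})$ by merging constraints with the same consequent $\bar{p}$ via disjunction of antecedents; reading $\leadsto$ as $\Rightarrow$ gives the set $P^l_{\Rightarrow}$. Tree formula: $[\![l]\!] = \mathcal{T}(\varphi,\emptyset)$ where $(\varphi\Rightarrow\bar{l})\in P^l_{\Rightarrow}$, and $\mathcal{T}(\cdot,\mathcal{D})$ (with $\mathcal{D}$ a set of literals) is defined by: $\mathcal{T}(\bar{c},\mathcal{D}) = \bar{c}\vee\mathcal{T}(\varphi,\mathcal{D}\cup\{\bar{c}\})$ if $\bar{c}\notin\mathcal{D}$ where $(\varphi\Rightarrow\bar{c})\in P^l_{\Rightarrow}$, and $=\bar{c}\vee\mathsf{ff}$ otherwise; $\mathcal{T}(\neg\bar{c},\mathcal{D})=\mathcal{T}(\neg\varphi,\mathcal{D}\cup\{\neg\bar{c}\})$ if $\neg\bar{c}\notin\mathcal{D}$ where $(\varphi\Rightarrow\bar{c})\in P^l_{\Rightarrow}$, and $=\mathsf{tt}$ otherwise; $\mathcal{T}(\bar{x},\mathcal{D})=\mathcal{T}(\varphi,\mathcal{D})$ and $\mathcal{T}(\neg\bar{x},\mathcal{D})=\mathcal{T}(\neg\varphi,\mathcal{D})$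 where $(\varphi\Rightarrow\bar{x})\in P^l_{\Rightarrow}$; $\mathcal{T}(\neg(\varphi_1\wedge\dots\wedge\varphi_n),\mathcal{D})=\bigvee_i\mathcal{T}(\neg\varphi_i,\mathcal{D})$; $\mathcal{T}(\neg(\varphi_1\vee\dots\vee\varphi_n),\mathcal{D})=\bigwedge_i\mathcal{T}(\neg\varphi_i,\mathcal{D})$; $\mathcal{T}(\varphi_1\wedge\dots\wedge\varphi_n,\mathcal{D})=\bigwedge_i\mathcal{T}(\varphi_i,\mathcal{D})$; $\mathcal{T}(\varphi_1\vee\dots\vee\varphi_n,\mathcal{D})=\bigvee_i\mathcal{T}(\varphi_i,\mathcal{D})$; $\mathcal{T}(\mathsf{tt},\mathcal{D})=\mathsf{tt}$; $\mathcal{T}(\mathsf{ff},\mathcal{D})=\mathsf{ff}$. *)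

theory Defs
  imports Main
begin

text \<open>Names (channels) have type 'n, variables type 'v, labels type 'l.
  Quality guards are restricted to the two guards of the statement.\<close>

datatype qual = QAll | QEx

datatype ('n, 'v) trm = TName 'n | TVar 'v

datatype ('n, 'v) bndr =
    BIn 'n 'v
  | BQ qual "('n, 'v) bndr list"

datatype ('n, 'v, 'l) proc =
    PNil
  | PNu 'n "('n, 'v, 'l) proc"
  | PPar "('n, 'v, 'l) proc" "('n, 'v, 'l) proc"
  | PInp 'l "('n, 'v) bndr" "('n, 'v, 'l) proc"
  | POut 'l 'n "('n, 'v) trm" "('n, 'v, 'l) proc"
  | PRep "('n, 'v, 'l) proc"
  | PCase 'l 'v 'v "('n, 'v, 'l) proc" "('n, 'v, 'l) proc"
      (* case x of some(y): P1 else P2 *)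

fun bvars_b :: "('n, 'v) bndr \<Rightarrow> 'v list" where
  "bvars_b (BIn c x) = [x]"
| "bvars_b (BQ q bs) = concat (map bvars_b bs)"

fun chans_b :: "('n, 'v) bndr \<Rightarrow> 'n list" where
  "chans_b (BIn c x) = [c]"
| "chans_b (BQ q bs) = concat (map chans_b bs)"

fun bvars :: "('n, 'v, 'l) proc \<Rightarrow> 'v list" where
  "bvars PNil = []"
| "bvars (PNu c P) = bvars P"
| "bvars (PPar P Q) = bvars P @ bvars Q"
| "bvars (PInp l b P) = bvars_b b @ bvars P"
| "bvars (POut l c t P) = bvars P"
| "bvars (PRep P) = bvars P"
| "bvars (PCase l x y P Q) = y # bvars P @ bvars Q"

fun bnames :: "('n, 'v, 'l) proc \<Rightarrow> 'n list" where
  "bnames PNil = []"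
| "bnames (PNu c P) = c # bnames P"
| "bnames (PPar P Q) = bnames P @ bnames Q"
| "bnames (PInp l b P) = bnames P"
| "bnames (POut l c t P) = bnames P"
| "bnames (PRep P) = bnames P"
| "bnames (PCase l x y P Q) = bnames P @ bnames Q"

fun fv_t :: "('n, 'v) trm \<Rightarrow> 'v set" where
  "fv_t (TName c) = {}"
| "fv_t (TVar y) = {y}"

fun fn_t :: "('n, 'v) trm \<Rightarrow> 'n set" where
  "fn_t (TName c) = {c}"
| "fn_t (TVar y) = {}"

fun fv :: "('n, 'v, 'l) proc \<Rightarrow> 'v set" where
  "fv PNil = {}"
| "fv (PNu c P) = fv P"
| "fv (PPar P Q) = fv P \<union> fv Q"
| "fv (PInp l b P) = fv P - set (bvars_b b)"
| "fv (POut l c t P) = fv_t t \<union> fv P"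
| "fv (PRep P) = fv P"
| "fv (PCase l x y P Q) = {x} \<union> (fv P - {y}) \<union> fv Q"

fun fnames :: "('n, 'v, 'l) proc \<Rightarrow> 'n set" where
  "fnames PNil = {}"
| "fnames (PNu c P) = fnames P - {c}"
| "fnames (PPar P Q) = fnames P \<union> fnames Q"
| "fnames (PInp l b P) = set (chans_b b) \<union> fnames P"
| "fnames (POut l c t P) = {c} \<union> fn_t t \<union> fnames P"
| "fnames (PRep P) = fnames P"
| "fnames (PCase l x y P Q) = fnames P \<union> fnames Q"

fun labels :: "('n, 'v, 'l) proc \<Rightarrow> 'l list" where
  "labels PNil = []"
| "labels (PNu c P) = labels P"
| "labels (PPar P Q) = labels P @ labels Q"
| "labels (PInp l b P) = l # labels P"
| "labels (POut l c t P) = l # labels P"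
| "labels (PRep P) = labels P"
| "labels (PCase l x y P Q) = l # labels P @ labels Q"

definition closed :: "('n, 'v, 'l) proc \<Rightarrow> bool" where
  "closed P \<longleftrightarrow> fv P = {}"

definition bound_once :: "('n, 'v, 'l) proc \<Rightarrow> bool" where
  "bound_once P \<longleftrightarrow> distinct (bvars P) \<and> distinct (bnames P)
                      \<and> set (bnames P) \<inter> fnames P = {}"

definition unique_labels :: "('n, 'v, 'l) proc \<Rightarrow> bool" where
  "unique_labels P \<longleftrightarrow> distinct (labels P)"

text \<open>Propositional variables: \<open>\<bar>c\<close> for channels, \<open>\<bar>x\<close> for variables, \<open>\<bar>l\<close> for labels.\<close>
datatype ('n, 'v, 'l) pvar = PC 'n | PX 'v | PL 'l

datatype ('n, 'v, 'l) form =
    FTT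
  | FFF
  | Lit "('n, 'v, 'l) pvar"
  | FNot "('n, 'v, 'l) form"
  | FAnd "('n, 'v, 'l) form list"
  | FOr "('n, 'v, 'l) form list"

fun qform :: "qual \<Rightarrow> ('n, 'v, 'l) form list \<Rightarrow> ('n, 'v, 'l) form" where
  "qform QAll fs = FAnd fs"
| "qform QEx fs = FOr fs"

fun hp :: "('n, 'v) bndr \<Rightarrow> ('n, 'v, 'l) form" where
  "hp (BIn c x) = Lit (PC c)"
| "hp (BQ q bs) = qform q (map hp bs)"

type_synonym ('n, 'v, 'l) constr = "('n, 'v, 'l) form \<times> ('n, 'v, 'l) pvar"

fun th :: "('n, 'v, 'l) form \<Rightarrow> ('n, 'v) bndr \<Rightarrow> ('n, 'v, 'l) constr list" where
  "th \<phi> (BIn c x) = [(FAnd [\<phi>, Lit (PC c)], PX x)]"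
| "th \<phi> (BQ q bs) = concat (map (th \<phi>) bs)"

text \<open>The translation \<open>T(P,\<phi>)\<close>; a constraint \<open>(\<phi>, p)\<close> stands for \<open>\<phi> \<leadsto> \<bar>p\<close>.\<close>
fun trans :: "('n, 'v, 'l) proc \<Rightarrow> ('n, 'v, 'l) form \<Rightarrow> ('n, 'v, 'l) constr list" where
  "trans PNil \<phi> = []"
| "trans (PRep P) \<phi> = trans P \<phi>"
| "trans (PPar P Q) \<phi> = trans P \<phi> @ trans Q \<phi>"
| "trans (PNu c P) \<phi> = trans P \<phi>"
| "trans (PInp l b P) \<phi> = trans P (FAnd [\<phi>, hp b]) @ th \<phi> b @ [(\<phi>, PL l)]"
| "trans (POut l c t P) \<phi> = trans P \<phi> @ [(\<phi>, PC c)] @ [(\<phi>, PL l)]"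
| "trans (PCase l x y P Q) \<phi> =
     trans P (FAnd [\<phi>, Lit (PX x)]) @ trans Q (FAnd [\<phi>, FNot (Lit (PX x))]) @ [(\<phi>, PL l)]"

text \<open>Normalisation: the antecedent of \<open>\<bar>p\<close> in \<open>P\<^sup>l\<^sub>\<Rightarrow>\<close> is the disjunction of all antecedents
  of constraints with consequent \<open>\<bar>p\<close> (the empty disjunction, i.e. ff, if there is none).\<close>
definition ante :: "('n, 'v, 'l) proc \<Rightarrow> ('n, 'v, 'l) pvar \<Rightarrow> ('n, 'v, 'l) form" where
  "ante P p = FOr (map fst (filter (\<lambda>(\<phi>, q). q = p) (trans P FTT)))"

text \<open>\<open>tree A D \<phi> \<psi>\<close> means \<open>\<T>(\<phi>, D) = \<psi>\<close>, where \<open>A p\<close> is the antecedent of \<open>\<bar>p\<close> and D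
  is a set of literals (formulas of shape \<open>\<bar>c\<close> or \<open>\<not>\<bar>c\<close>). Since the recursion is not
  structural it is given as an inductive (deterministic) relation.\<close>
inductive tree :: "(('n, 'v, 'l) pvar \<Rightarrow> ('n, 'v, 'l) form) \<Rightarrow> ('n, 'v, 'l) form set
                   \<Rightarrow> ('n, 'v, 'l) form \<Rightarrow> ('n, 'v, 'l) form \<Rightarrow> bool"
  for A :: "('n, 'v, 'l) pvar \<Rightarrow> ('n, 'v, 'l) form" where
  chan_new: "Lit (PC c) \<notin> D \<Longrightarrow> tree A (insert (Lit (PC c)) D) (A (PC c)) \<psi>
             \<Longrightarrow> tree A D (Lit (PC c)) (FOr [Lit (PC c), \<psi>])"
| chan_old: "Lit (PC c) \<in> D \<Longrightarrow> tree A D (Lit (PC c)) (FOr [Lit (PC c), FFF])"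
| nchan_new: "FNot (Lit (PC c)) \<notin> D
             \<Longrightarrow> tree A (insert (FNot (Lit (PC c))) D) (FNot (A (PC c))) \<psi>
             \<Longrightarrow> tree A D (FNot (Lit (PC c))) \<psi>"
| nchan_old: "FNot (Lit (PC c)) \<in> D \<Longrightarrow> tree A D (FNot (Lit (PC c))) FTT"
| var: "tree A D (A (PX x)) \<psi> \<Longrightarrow> tree A D (Lit (PX x)) \<psi>"
| nvar: "tree A D (FNot (A (PX x))) \<psi> \<Longrightarrow> tree A D (FNot (Lit (PX x))) \<psi>"
| nand: "list_all2 (\<lambda>f g. tree A D (FNot f) g) fs gs \<Longrightarrow> tree A D (FNot (FAnd fs)) (FOr gs)"
| nor: "list_all2 (\<lambda>f g. tree A D (FNot f) g) fs gs \<Longrightarrow> tree A D (FNot (FOr fs)) (FAnd gs)"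
| conj: "list_all2 (\<lambda>f g. tree A D f g) fs gs \<Longrightarrow> tree A D (FAnd fs) (FAnd gs)"
| disj: "list_all2 (\<lambda>f g. tree A D f g) fs gs \<Longrightarrow> tree A D (FOr fs) (FOr gs)"
| tt: "tree A D FTT FTT"
| ff: "tree A D FFF FFF"
| ntt: "tree A D (FNot FTT) FFF"
| nff: "tree A D (FNot FFF) FTT"
| nnot: "tree A D f g \<Longrightarrow> tree A D (FNot (FNot f)) g"

definition label_formula :: "('n, 'v, 'l) proc \<Rightarrow> 'l \<Rightarrow> ('n, 'v, 'l) form \<Rightarrow> bool" where
  "label_formula P l \<psi> \<longleftrightarrow> tree (ante P) {} (ante P (PL l)) \<psi>"

fun lits :: "('n, 'v, 'l) form \<Rightarrow> ('n, 'v, 'l) pvar set" where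
  "lits FTT = {}"
| "lits FFF = {}"
| "lits (Lit p) = {p}"
| "lits (FNot f) = lits f"
| "lits (FAnd fs) = \<Union> (set (map lits fs))"
| "lits (FOr fs) = \<Union> (set (map lits fs))"

end

theory Submission
  imports Defs
begin

lemma la2_set: "list_all2 Q fs gs \<Longrightarrow> g \<in> set gs \<Longrightarrow> \<exists>f\<in>set fs. Q f g"
  by (induction fs arbitrary: gs) (simp, force simp: list_all2_Cons1)

lemma la2_ex: "\<forall>f\<in>set fs. \<exists>g. Q f g \<Longrightarrow> \<exists>gs. list_all2 Q fs gs"
proof (induction fs)
  case Nil then show ?case by auto
next
  case (Cons a fs)
  then obtain g gs where "Q a g" "list_all2 Q fs gs" by auto
  then show ?case by (intro exI[of _ "g # gs"]) auto
qed

lemma tree_lits: "tree A D f g \<Longrightarrow> \<forall>p\<in>lits g. \<exists>c. p = PC c"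
proof (induction rule: tree.induct)
  case (nand fs gs) then show ?case by (fastforce dest: la2_set)
next
  case (nor fs gs) then show ?case by (fastforce dest: la2_set)
next
  case (conj fs gs) then show ?case by (fastforce dest: la2_set)
next
  case (disj fs gs) then show ?case by (fastforce dest: la2_set)
qed auto

section \<open>Existence of the tree formula\<close>

definition plfree :: "('n,'v,'l) form \<Rightarrow> bool" where
  "plfree f \<longleftrightarrow> (\<forall>l. PL l \<notin> lits f)"

lemma tree_exists_fixedD:
  fixes A :: "('n,'v,'l) pvar \<Rightarrow> ('n,'v,'l) form"
  assumes rank: "\<And>x x'. PX x' \<in> lits (A (PX x)) \<Longrightarrow> r x' < (r x :: nat)"
    and nol: "\<And>p. plfree (A p)"
    and chanIH: "\<And>c. Lit (PC c) \<notin> D \<Longrightarrow> \<exists>g. tree A (insert (Lit (PC c)) D) (A (PC c)) g"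
    and nchanIH: "\<And>c. FNot (Lit (PC c)) \<notin> D \<Longrightarrow> \<exists>g. tree A (insert (FNot (Lit (PC c))) D) (FNot (A (PC c))) g"
  shows "\<forall>f. plfree f \<longrightarrow> (\<forall>x. PX x \<in> lits f \<longrightarrow> r x < n) \<longrightarrow>
           (\<exists>g. tree A D f g) \<and> (\<exists>g. tree A D (FNot f) g)"
proof (induction n)
  case 0
  show ?case
  proof (intro allI impI)
    fix f :: "('n,'v,'l) form"
    assume "plfree f" "\<forall>x. PX x \<in> lits f \<longrightarrow> r x < 0"
    then show "(\<exists>g. tree A D f g) \<and> (\<exists>g. tree A D (FNot f) g)"
    proof (induction f)
      case FTT then show ?case using tree.tt[where A=A] tree.ntt[where A=A] by blast
    next
      case FFF then show ?case using tree.ff[where A=A] tree.nff[where A=A] by blast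
    next
      case (Lit p)
      show ?case
      proof (cases p)
        case (PC c)
        have 1: "\<exists>g. tree A D (Lit (PC c)) g"
        proof (cases "Lit (PC c) \<in> D")
          case True show ?thesis using tree.chan_old[where A=A, OF True] by (rule exI)
        next
          case False
          then obtain g where g: "tree A (insert (Lit (PC c)) D) (A (PC c)) g"
            using chanIH by blast
          show ?thesis using tree.chan_new[where A=A, OF False g] by (rule exI)
        qed
        have 2: "\<exists>g. tree A D (FNot (Lit (PC c))) g"
        proof (cases "FNot (Lit (PC c)) \<in> D")
          case True show ?thesis using tree.nchan_old[where A=A, OF True] by (rule exI)
        next
          case False
          obtain g where g: "tree A (insert (FNot (Lit (PC c))) D) (FNot (A (PC c))) g"
            using nchanIH False by blast
          show ?thesis using tree.nchan_new[where A=A, OF False g] by (rule exI)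
        qed
        show ?thesis using 1 2 PC by simp
      next
        case (PX x) then show ?thesis using Lit by auto
      next
        case (PL l) then show ?thesis using Lit by (auto simp: plfree_def)
      qed
    next
      case (FNot f)
      then have "(\<exists>g. tree A D f g) \<and> (\<exists>g. tree A D (FNot f) g)" by (auto simp: plfree_def)
      then show ?case using tree.nnot[where A=A] by blast
    next
      case (FAnd fs)
      have h: "\<forall>f\<in>set fs. (\<exists>g. tree A D f g) \<and> (\<exists>g. tree A D (FNot f) g)"
      proof
        fix f assume f: "f \<in> set fs"
        have "plfree f" using FAnd.prems(1) f by (auto simp: plfree_def)
        moreover have "\<forall>x. PX x \<in> lits f \<longrightarrow> r x < 0" using FAnd.prems(2) f by auto
        ultimately show "(\<exists>g. tree A D f g) \<and> (\<exists>g. tree A D (FNot f) g)" using FAnd.IH f by blast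
      qed
      obtain gs where gs: "list_all2 (\<lambda>f g. tree A D f g) fs gs"
        using la2_ex[of fs "\<lambda>f g. tree A D f g"] h by blast
      obtain hs where hs: "list_all2 (\<lambda>f g. tree A D (FNot f) g) fs hs"
        using la2_ex[of fs "\<lambda>f g. tree A D (FNot f) g"] h by blast
      show ?case using tree.conj[where A=A, OF gs] tree.nand[where A=A, OF hs] by blast
    next
      case (FOr fs)
      have h: "\<forall>f\<in>set fs. (\<exists>g. tree A D f g) \<and> (\<exists>g. tree A D (FNot f) g)"
      proof
        fix f assume f: "f \<in> set fs"
        have "plfree f" using FOr.prems(1) f by (auto simp: plfree_def)
        moreover have "\<forall>x. PX x \<in> lits f \<longrightarrow> r x < 0" using FOr.prems(2) f by auto
        ultimately show "(\<exists>g. tree A D f g) \<and> (\<exists>g. tree A D (FNot f) g)" using FOr.IH f by blast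
      qed
      obtain gs where gs: "list_all2 (\<lambda>f g. tree A D f g) fs gs"
        using la2_ex[of fs "\<lambda>f g. tree A D f g"] h by blast
      obtain hs where hs: "list_all2 (\<lambda>f g. tree A D (FNot f) g) fs hs"
        using la2_ex[of fs "\<lambda>f g. tree A D (FNot f) g"] h by blast
      show ?case using tree.disj[where A=A, OF gs] tree.nor[where A=A, OF hs] by blast
    qed
  qed
next
  case (Suc m)
  show ?case
  proof (intro allI impI)
    fix f :: "('n,'v,'l) form"
    assume "plfree f" "\<forall>x. PX x \<in> lits f \<longrightarrow> r x < Suc m"
    then show "(\<exists>g. tree A D f g) \<and> (\<exists>g. tree A D (FNot f) g)"
    proof (induction f)
      case FTT then show ?case using tree.tt[where A=A] tree.ntt[where A=A] by blast
    next
      case FFF then show ?case using tree.ff[where A=A] tree.nff[where A=A] by blast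
    next
      case (Lit p)
      show ?case
      proof (cases p)
        case (PC c)
        have 1: "\<exists>g. tree A D (Lit (PC c)) g"
        proof (cases "Lit (PC c) \<in> D")
          case True show ?thesis using tree.chan_old[where A=A, OF True] by (rule exI)
        next
          case False
          then obtain g where g: "tree A (insert (Lit (PC c)) D) (A (PC c)) g"
            using chanIH by blast
          show ?thesis using tree.chan_new[where A=A, OF False g] by (rule exI)
        qed
        have 2: "\<exists>g. tree A D (FNot (Lit (PC c))) g"
        proof (cases "FNot (Lit (PC c)) \<in> D")
          case True show ?thesis using tree.nchan_old[where A=A, OF True] by (rule exI)
        next
          case False
          obtain g where g: "tree A (insert (FNot (Lit (PC c))) D) (FNot (A (PC c))) g"
            using nchanIH False by blast
          show ?thesis using tree.nchan_new[where A=A, OF False g] by (rule exI)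
        qed
        show ?thesis using 1 2 PC by simp
      next
        case (PX x)
        then have "r x < Suc m" using Lit by auto
        then have "\<forall>x'. PX x' \<in> lits (A (PX x)) \<longrightarrow> r x' < m" using rank by fastforce
        then have "(\<exists>g. tree A D (A (PX x)) g) \<and> (\<exists>g. tree A D (FNot (A (PX x))) g)"
          using Suc.IH nol by blast
        then show ?thesis using PX tree.var[where A=A] tree.nvar[where A=A] by blast
      next
        case (PL l) then show ?thesis using Lit by (auto simp: plfree_def)
      qed
    next
      case (FNot f)
      then have "(\<exists>g. tree A D f g) \<and> (\<exists>g. tree A D (FNot f) g)" by (auto simp: plfree_def)
      then show ?case using tree.nnot[where A=A] by blast
    next
      case (FAnd fs)
      have h: "\<forall>f\<in>set fs. (\<exists>g. tree A D f g) \<and> (\<exists>g. tree A D (FNot f) g)"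
      proof
        fix f assume f: "f \<in> set fs"
        have "plfree f" using FAnd.prems(1) f by (auto simp: plfree_def)
        moreover have "\<forall>x. PX x \<in> lits f \<longrightarrow> r x < Suc m" using FAnd.prems(2) f by auto
        ultimately show "(\<exists>g. tree A D f g) \<and> (\<exists>g. tree A D (FNot f) g)" using FAnd.IH f by blast
      qed
      obtain gs where gs: "list_all2 (\<lambda>f g. tree A D f g) fs gs"
        using la2_ex[of fs "\<lambda>f g. tree A D f g"] h by blast
      obtain hs where hs: "list_all2 (\<lambda>f g. tree A D (FNot f) g) fs hs"
        using la2_ex[of fs "\<lambda>f g. tree A D (FNot f) g"] h by blast
      show ?case using tree.conj[where A=A, OF gs] tree.nand[where A=A, OF hs] by blast
    next
      case (FOr fs)
      have h: "\<forall>f\<in>set fs. (\<exists>g. tree A D f g) \<and> (\<exists>g. tree A D (FNot f) g)"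
      proof
        fix f assume f: "f \<in> set fs"
        have "plfree f" using FOr.prems(1) f by (auto simp: plfree_def)
        moreover have "\<forall>x. PX x \<in> lits f \<longrightarrow> r x < Suc m" using FOr.prems(2) f by auto
        ultimately show "(\<exists>g. tree A D f g) \<and> (\<exists>g. tree A D (FNot f) g)" using FOr.IH f by blast
      qed
      obtain gs where gs: "list_all2 (\<lambda>f g. tree A D f g) fs gs"
        using la2_ex[of fs "\<lambda>f g. tree A D f g"] h by blast
      obtain hs where hs: "list_all2 (\<lambda>f g. tree A D (FNot f) g) fs hs"
        using la2_ex[of fs "\<lambda>f g. tree A D (FNot f) g"] h by blast
      show ?case using tree.disj[where A=A, OF gs] tree.nor[where A=A, OF hs] by blast
    qed
  qed
qed

lemma finite_lits: "finite (lits f)"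
  by (induction f) auto

lemma tree_exists_D:
  fixes A :: "('n,'v,'l) pvar \<Rightarrow> ('n,'v,'l) form"
  assumes rank: "\<And>x x'. PX x' \<in> lits (A (PX x)) \<Longrightarrow> r x' < (r x :: nat)"
    and nol: "\<And>p. plfree (A p)"
    and fin: "finite C" and out: "\<And>c. c \<notin> C \<Longrightarrow> A (PC c) = FOr []"
  shows "plfree f \<Longrightarrow> \<exists>g. tree A D f g"
proof (induction "card (((\<lambda>c. Lit (PC c)) ` C \<union> (\<lambda>c. FNot (Lit (PC c))) ` C) - D)"
       arbitrary: D f rule: less_induct)
  case less
  define L :: "('n,'v,'l) form set" where "L = (\<lambda>c. Lit (PC c)) ` C \<union> (\<lambda>c. FNot (Lit (PC c))) ` C"
  have finL: "finite L" using fin by (simp add: L_def)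
  have cIH: "\<exists>g. tree A (insert (Lit (PC c)) D) (A (PC c)) g"
    if "Lit (PC c) \<notin> D" for c
  proof (cases "c \<in> C")
    case True
    then have "L - insert (Lit (PC c)) D \<subset> L - D" using that by (auto simp: L_def)
    then have "card (L - insert (Lit (PC c)) D) < card (L - D)"
      using finL by (meson finite_Diff psubset_card_mono)
    then show ?thesis using less.hyps[OF _ nol[of "PC c"]] unfolding L_def by blast
  next
    case False
    have "tree A (insert (Lit (PC c)) D) (FOr []) (FOr [])" by (rule tree.disj) simp
    then show ?thesis using out[OF False] by auto
  qed
  have ncIH: "\<exists>g. tree A (insert (FNot (Lit (PC c))) D) (FNot (A (PC c))) g"
    if "FNot (Lit (PC c)) \<notin> D" for c
  proof (cases "c \<in> C")
    case True
    then have "L - insert (FNot (Lit (PC c))) D \<subset> L - D" using that by (auto simp: L_def)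
    then have "card (L - insert (FNot (Lit (PC c))) D) < card (L - D)"
      using finL by (meson finite_Diff psubset_card_mono)
    moreover have "plfree (FNot (A (PC c)))" using nol[of "PC c"] by (simp add: plfree_def)
    ultimately show ?thesis using less.hyps unfolding L_def by presburger
  next
    case False
    have "tree A (insert (FNot (Lit (PC c))) D) (FNot (FOr [])) (FAnd [])" by (rule tree.nor) simp
    then show ?thesis using out[OF False] by auto
  qed
  obtain n where n: "\<forall>x. PX x \<in> lits f \<longrightarrow> r x < n"
  proof -
    have "finite (lits f)" by (rule finite_lits)
    have "inj PX" by (simp add: inj_def)
    then have "finite (PX -` lits f)" using \<open>finite (lits f)\<close> by (rule finite_vimageI[rotated])
    then have "finite (r ` {x. PX x \<in> lits f})" by (simp add: vimage_def)
    then obtain n where "\<forall>y\<in>r ` {x. PX x \<in> lits f}. y < n"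
      using finite_nat_set_iff_bounded by blast
    then show ?thesis using that by auto
  qed
  show ?case using tree_exists_fixedD[where A=A and r=r and D=D and n=n, OF rank nol cIH ncIH] less.prems n by blast
qed

section \<open>Properties of the translation\<close>

fun vdepth :: "('n,'v,'l) proc \<Rightarrow> 'v \<Rightarrow> nat" where
  "vdepth PNil x = 0"
| "vdepth (PNu c P) x = vdepth P x"
| "vdepth (PPar P Q) x = (if x \<in> set (bvars P) then vdepth P x else vdepth Q x)"
| "vdepth (PInp l b P) x = (if x \<in> set (bvars_b b) then 1 else Suc (vdepth P x))"
| "vdepth (POut l c t P) x = vdepth P x"
| "vdepth (PRep P) x = vdepth P x"
| "vdepth (PCase l x0 y P Q) x =
     (if x = y then 1 else if x \<in> set (bvars P) then Suc (vdepth P x) else Suc (vdepth Q x))"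

lemma th_mem: "(\<psi>, p) \<in> set (th \<phi> b) \<Longrightarrow>
  \<exists>c x. \<psi> = FAnd [\<phi>, Lit (PC c)] \<and> p = PX x \<and> x \<in> set (bvars_b b)"
  by (induction b) (simp, fastforce)

lemma hp_lits: "p \<in> lits (hp b :: ('n,'v,'l) form) \<Longrightarrow> \<exists>c. p = PC c"
proof (induction b)
  case (BIn c x) then show ?case by simp
next
  case (BQ q bs) then show ?case by (cases q) auto
qed

lemma pl_inv: "(\<psi>, p) \<in> set (trans P \<phi>) \<Longrightarrow> plfree \<phi> \<Longrightarrow> plfree \<psi>"
proof (induction P arbitrary: \<phi>)
  case (PInp l b P)
  have "plfree (FAnd [\<phi>, hp b])" using PInp.prems(2) hp_lits[of _ b]
    by (fastforce simp: plfree_def)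
  then show ?case using PInp th_mem[of \<psi> p \<phi> b] by (auto simp: plfree_def)
next
  case (PCase l x y P Q)
  have "plfree (FAnd [\<phi>, Lit (PX x)])" "plfree (FAnd [\<phi>, FNot (Lit (PX x))])"
    using PCase.prems(2) by (auto simp: plfree_def)
  then show ?case using PCase by auto
qed auto

lemma rank_inv:
  "distinct (bvars P) \<Longrightarrow> (\<forall>x\<in>set (bvars P). r x = k + vdepth P x) \<Longrightarrow> (\<forall>x\<in>fv P. r x \<le> k)
   \<Longrightarrow> (\<forall>x. PX x \<in> lits \<phi> \<longrightarrow> r x \<le> k) \<Longrightarrow> (\<psi>, PX x) \<in> set (trans P \<phi>)
   \<Longrightarrow> PX x' \<in> lits \<psi> \<Longrightarrow> r x' < (r x :: nat)"
proof (induction P arbitrary: k \<phi> \<psi>)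
  case PNil then show ?case by simp
next
  case (PNu c P) show ?case by (rule PNu.IH[of k \<phi> \<psi>]) (use PNu.prems in auto)
next
  case (PRep P) show ?case by (rule PRep.IH[of k \<phi> \<psi>]) (use PRep.prems in auto)
next
  case (POut l c t P) show ?case by (rule POut.IH[of k \<phi> \<psi>]) (use POut.prems in auto)
next
  case (PPar P Q)
  show ?case
  proof (cases "(\<psi>, PX x) \<in> set (trans P \<phi>)")
    case True
    show ?thesis
    proof (rule PPar.IH(1)[OF _ _ _ _ True PPar.prems(6)])
      show "distinct (bvars P)" using PPar.prems(1) by simp
      show "\<forall>x\<in>set (bvars P). r x = k + vdepth P x" using PPar.prems(2) by simp
      show "\<forall>x\<in>fv P. r x \<le> k" using PPar.prems(3) by simp
      show "\<forall>x. PX x \<in> lits \<phi> \<longrightarrow> r x \<le> k" using PPar.prems(4) by simp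
    qed
  next
    case False
    then have m: "(\<psi>, PX x) \<in> set (trans Q \<phi>)" using PPar.prems(5) by simp
    show ?thesis
    proof (rule PPar.IH(2)[OF _ _ _ _ m PPar.prems(6)])
      show "distinct (bvars Q)" using PPar.prems(1) by simp
      show "\<forall>x\<in>set (bvars Q). r x = k + vdepth Q x" using PPar.prems(1,2) by auto
      show "\<forall>x\<in>fv Q. r x \<le> k" using PPar.prems(3) by simp
      show "\<forall>x. PX x \<in> lits \<phi> \<longrightarrow> r x \<le> k" using PPar.prems(4) by simp
    qed
  qed
next
  case (PInp l b P)
  have d: "distinct (bvars_b b)" "distinct (bvars P)" "set (bvars_b b) \<inter> set (bvars P) = {}"
    using PInp.prems(1) by auto
  have rb: "\<forall>x\<in>set (bvars_b b). r x = Suc k" using PInp.prems(2) by simp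
  from PInp.prems(5) consider
      (a) "(\<psi>, PX x) \<in> set (trans P (FAnd [\<phi>, hp b]))"
    | (b) "(\<psi>, PX x) \<in> set (th \<phi> b)" by auto
  then show ?case
  proof cases
    case a
    show ?thesis
    proof (rule PInp.IH[OF _ _ _ _ a PInp.prems(6)])
      show "distinct (bvars P)" by (rule d(2))
      show "\<forall>x\<in>set (bvars P). r x = Suc k + vdepth P x" using PInp.prems(2) d(3) by auto
      show "\<forall>x\<in>fv P. r x \<le> Suc k"
      proof
        fix y assume "y \<in> fv P"
        then show "r y \<le> Suc k" using PInp.prems(3) rb by (cases "y \<in> set (bvars_b b)") (auto simp: le_SucI)
      qed
      show "\<forall>x. PX x \<in> lits (FAnd [\<phi>, hp b]) \<longrightarrow> r x \<le> Suc k"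
        using PInp.prems(4) hp_lits[of _ b] by fastforce
    qed
  next
    case b
    then obtain c where "\<psi> = FAnd [\<phi>, Lit (PC c)]" "x \<in> set (bvars_b b)"
      using th_mem by fastforce
    then show ?thesis using PInp.prems(4,6) rb by fastforce
  qed
next
  case (PCase l x0 y P Q)
  have d: "distinct (bvars P)" "distinct (bvars Q)" "y \<notin> set (bvars P)" "y \<notin> set (bvars Q)"
      "set (bvars P) \<inter> set (bvars Q) = {}"
    using PCase.prems(1) by auto
  have ry: "r y = Suc k" using PCase.prems(2) by simp
  have rx0: "r x0 \<le> k" using PCase.prems(3) by simp
  from PCase.prems(5) consider
      (a) "(\<psi>, PX x) \<in> set (trans P (FAnd [\<phi>, Lit (PX x0)]))"
    | (b) "(\<psi>, PX x) \<in> set (trans Q (FAnd [\<phi>, FNot (Lit (PX x0))]))" by auto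
  then show ?case
  proof cases
    case a
    show ?thesis
    proof (rule PCase.IH(1)[OF _ _ _ _ a PCase.prems(6)])
      show "distinct (bvars P)" by (rule d(1))
      show "\<forall>x\<in>set (bvars P). r x = Suc k + vdepth P x" using PCase.prems(2) d by auto
      show "\<forall>x\<in>fv P. r x \<le> Suc k"
      proof
        fix z assume "z \<in> fv P"
        then show "r z \<le> Suc k" using PCase.prems(3) ry by (cases "z = y") (auto simp: le_SucI)
      qed
      show "\<forall>x. PX x \<in> lits (FAnd [\<phi>, Lit (PX x0)]) \<longrightarrow> r x \<le> Suc k"
        using PCase.prems(4) rx0 by auto
    qed
  next
    case b
    show ?thesis
    proof (rule PCase.IH(2)[OF _ _ _ _ b PCase.prems(6)])
      show "distinct (bvars Q)" by (rule d(2))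
      show "\<forall>x\<in>set (bvars Q). r x = Suc k + vdepth Q x" using PCase.prems(2) d by auto
      show "\<forall>x\<in>fv Q. r x \<le> Suc k" using PCase.prems(3) by (auto simp: le_SucI)
      show "\<forall>x. PX x \<in> lits (FAnd [\<phi>, FNot (Lit (PX x0))]) \<longrightarrow> r x \<le> Suc k"
        using PCase.prems(4) rx0 by auto
    qed
  qed
qed

lemma ante_mem: "p' \<in> lits (ante P p) \<Longrightarrow> \<exists>\<psi>. (\<psi>, p) \<in> set (trans P FTT) \<and> p' \<in> lits \<psi>"
  unfolding ante_def by auto

lemma lf_lits: "label_formula P l \<psi> \<Longrightarrow> \<forall>p\<in>lits \<psi>. \<exists>c. p = PC c"
  unfolding label_formula_def by (rule tree_lits)

theorem lemmaB3:
  fixes P :: "('n, 'v, 'l) proc"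
  assumes "closed P" and "bound_once P" and "unique_labels P"
  shows "\<forall>l \<in> set (labels P).
           (\<exists>\<psi>. label_formula P l \<psi>) \<and>
           (\<forall>\<psi>. label_formula P l \<psi> \<longrightarrow>
                (\<forall>x. PX x \<notin> lits \<psi>) \<and> (\<forall>p \<in> lits \<psi>. \<exists>c. p = PC c))"
proof (intro ballI conjI allI impI)
  fix l assume "l \<in> set (labels P)"
  have dist: "distinct (bvars P)" using assms(2) by (simp add: bound_once_def)
  have rank: "vdepth P x' < vdepth P x" if h: "PX x' \<in> lits (ante P (PX x))" for x x'
  proof -
    obtain \<psi> where m: "(\<psi>, PX x) \<in> set (trans P FTT)" "PX x' \<in> lits \<psi>"
      using ante_mem[OF h] by blast
    show ?thesis
    proof (rule rank_inv[where k=0, OF dist _ _ _ m])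
      show "\<forall>x\<in>fv P. vdepth P x \<le> 0" using assms(1) by (simp add: closed_def)
    qed auto
  qed
  have nol: "plfree (ante P p)" for p
    unfolding ante_def plfree_def
    using pl_inv[of _ _ P FTT] by (fastforce simp: plfree_def)
  define C where "C = PC -` (snd ` set (trans P FTT))"
  have finC: "finite C" unfolding C_def by (rule finite_vimageI) (auto simp: inj_def)
  have out: "ante P (PC c) = FOr []" if "c \<notin> C" for c
    using that unfolding C_def ante_def by (force simp: filter_empty_conv)
  have "\<exists>g. tree (ante P) {} (ante P (PL l)) g"
    by (rule tree_exists_D[where A="ante P" and r="vdepth P" and C=C, OF rank nol finC out nol])
  then show "\<exists>\<psi>. label_formula P l \<psi>" unfolding label_formula_def .
qed (use lf_lits in fastforce)+

end
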